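(* Suppose every agent is either of type P or does not satisfy (M). If there is an agent $i$ of type P and $\chi(0)\in\Delta_{A-1}^o$ such that $$\limsup_{N\to\infty}\frac{\sum_{k=\chi_i(0)N}^\infty 1/F_i(k)}{\sum_{k=\chi_j(0)N}^\infty 1/F_j(k)}<1\quad\text{for all }j\ne i,$$ then $\lim_{N\to\infty}\mathbb{P}(sMon_i(\chi(0),N))=1$.
   Context: Fix $A\ge 2$, $[A]=\{1,\dots,A\}$, and feedback functions $F_i:\mathbb{N}\to(0,\infty)$. The generalized Pólya urn is the Markov chain $X(n)\in\mathbb{N}^A$, $n\in\mathbb{N}_0$, with $X_i(0)\ge1$ and $\mathbb{P}(X(n+1)=X(n)+e^{(i)}\mid X(n))=F_i(X_i(n))/\sum_{j}F_j(X_j(n))$. $N=\sum_iX_i(0)$; $\Delta_{A-1}^o$ is the interior of the simplex $\{x\in[0,1]^A:\sum x_i=1\}$. For fixed $\chi(0)\in\Delta_{A-1}^o$ the process starts from $X_i(0)=\chi_i(0)N$ (rounded; sums with non-integer lower limit start at the rounded value). Strong monopoly: $sMon_i(\chi(0),N)=\{\lim_{n\to\infty}\sum_{j\ne i}X_j(n)<\infty\}$. Condition (M) for agent $i$: $\sum_{k\ge1}1/F_i(k)<\infty$ (if it fails, the denominator sum above is $+\infty$). Agent $i$ is of type P if it satisfies (M) and $\lim_{k\to\infty}F_i(k)\sum_{l=k}^\infty1/F_i(l)=\infty$. *)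

theory Defs
  imports "HOL-Probability.Probability"
begin

text \<open>Agents are the indices 1..A. Feedback functions: F i k, meaningful for k >= 1.
  Urn configurations are functions nat => nat (only entries 1..A matter).\<close>

definition condM :: "(nat \<Rightarrow> nat \<Rightarrow> real) \<Rightarrow> nat \<Rightarrow> bool" where
  "condM F i \<longleftrightarrow> summable (\<lambda>k. 1 / F i (Suc k))"

definition typeP :: "(nat \<Rightarrow> nat \<Rightarrow> real) \<Rightarrow> nat \<Rightarrow> bool" where
  "typeP F i \<longleftrightarrow> condM F i \<and>
     filterlim (\<lambda>k. F i k * (\<Sum>l. 1 / F i (l + k))) at_top sequentially"

text \<open>Tail sum of 1/F_i from m on, valued in the extended reals (= infinity if (M) fails).\<close>
definition tail_sum :: "(nat \<Rightarrow> nat \<Rightarrow> real) \<Rightarrow> nat \<Rightarrow> nat \<Rightarrow> ereal" where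
  "tail_sum F i m = (\<Sum>l. ereal (1 / F i (l + m)))"

definition urn_init :: "(nat \<Rightarrow> real) \<Rightarrow> nat \<Rightarrow> nat \<Rightarrow> nat" where
  "urn_init chi N i = nat (round (chi i * real N))"

definition urn_prob :: "nat \<Rightarrow> (nat \<Rightarrow> nat \<Rightarrow> real) \<Rightarrow> (nat \<Rightarrow> nat) \<Rightarrow> nat \<Rightarrow> real" where
  "urn_prob A F x i = F i (x i) / (\<Sum>j=1..A. F j (x j))"

text \<open>X is (a realisation on the probability space M of) the generalized Polya urn
  started at x0: the finite-dimensional path probabilities are those of the Markov chain.\<close>
definition is_urn_process ::
  "nat \<Rightarrow> (nat \<Rightarrow> nat \<Rightarrow> real) \<Rightarrow> 'w measure \<Rightarrow> (nat \<Rightarrow> 'w \<Rightarrow> (nat \<Rightarrow> nat)) \<Rightarrow> (nat \<Rightarrow> nat) \<Rightarrow> bool" where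
  "is_urn_process A F M X x0 \<longleftrightarrow>
     prob_space M \<and>
     (\<forall>n. X n \<in> measurable M (count_space UNIV)) \<and>
     measure M {\<omega>\<in>space M. X 0 \<omega> = x0} = 1 \<and>
     (\<forall>n h i. i \<in> {1..A} \<longrightarrow>
        measure M {\<omega>\<in>space M. (\<forall>m\<le>n. X m \<omega> = h m) \<and> X (Suc n) \<omega> = (h n)(i := h n i + 1)}
        = measure M {\<omega>\<in>space M. \<forall>m\<le>n. X m \<omega> = h m} * urn_prob A F (h n) i)"

definition sMon :: "nat \<Rightarrow> nat \<Rightarrow> 'w measure \<Rightarrow> (nat \<Rightarrow> 'w \<Rightarrow> (nat \<Rightarrow> nat)) \<Rightarrow> 'w set" where
  "sMon A i M X = {\<omega>\<in>space M. \<exists>L::real.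
      (\<lambda>n. real (\<Sum>j\<in>{1..A}-{i}. X n \<omega> j)) \<longlonglongrightarrow> L}"

end

theory Submission
  imports Defs
begin


definition pathf :: "(nat \<Rightarrow> nat) \<Rightarrow> nat list \<Rightarrow> nat \<Rightarrow> (nat \<Rightarrow> nat)" where
  "pathf x0 ks m = (\<lambda>j. x0 j + length (filter (\<lambda>k. k = j) (take m ks)))"

definition Hs :: "nat \<Rightarrow> nat \<Rightarrow> nat list set" where
  "Hs A n = {ks. length ks = n \<and> set ks \<subseteq> {1..A}}"

lemma pathf_0[simp]: "pathf x0 ks 0 = x0"
  by (simp add: pathf_def)

lemma pathf_snoc: "m \<le> length ks \<Longrightarrow> pathf x0 (ks@[k]) m = pathf x0 ks m"
  by (simp add: pathf_def)

lemma pathf_snoc_last: "pathf x0 (ks@[k]) (Suc (length ks)) =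
   (pathf x0 ks (length ks))(k := pathf x0 ks (length ks) k + 1)"
  by (auto simp: pathf_def fun_eq_iff)

lemma length_filter_take_mono: "m \<le> m' \<Longrightarrow> length (filter P (take m xs)) \<le> length (filter P (take m' xs))"
proof -
  assume "m \<le> m'"
  then have "take m xs = take m (take m' xs)" by (simp add: min_absorb1)
  moreover have "length (filter P (take m ys)) \<le> length (filter P ys)" for ys
    by (metis append_take_drop_id filter_append length_append le_add1)
  ultimately show ?thesis by metis
qed

lemma pathf_mono: "m \<le> m' \<Longrightarrow> pathf x0 ks m j \<le> pathf x0 ks m' j"
  by (simp add: pathf_def length_filter_take_mono)

lemma pathf_ge: "x0 j \<le> pathf x0 ks m j"
  by (simp add: pathf_def)

lemma finite_Hs: "finite (Hs A n)"
proof -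
  have "Hs A n = {xs. set xs \<subseteq> {1..A} \<and> length xs = n}" by (auto simp: Hs_def)
  then show ?thesis using finite_lists_length_eq[of "{1..A}" n] by simp
qed

lemma Hs_0: "Hs A 0 = {[]}" by (auto simp: Hs_def)

lemma Hs_Suc: "Hs A (Suc n) = (\<lambda>(ks,k). ks@[k]) ` (Hs A n \<times> {1..A})"
proof
  show "Hs A (Suc n) \<subseteq> (\<lambda>(ks,k). ks@[k]) ` (Hs A n \<times> {1..A})"
  proof
    fix xs assume "xs \<in> Hs A (Suc n)"
    then have l: "length xs = Suc n" and s: "set xs \<subseteq> {1..A}" by (auto simp: Hs_def)
    then have "xs \<noteq> []" by auto
    then have e: "xs = butlast xs @ [last xs]" by simp
    have "set (butlast xs) \<subseteq> {1..A}" using s by (meson in_set_butlastD subset_iff)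
    moreover have "last xs \<in> {1..A}" using s last_in_set[OF \<open>xs \<noteq> []\<close>] by blast
    ultimately show "xs \<in> (\<lambda>(ks,k). ks@[k]) ` (Hs A n \<times> {1..A})"
      using l e by (auto simp: Hs_def intro!: image_eqI[where x="(butlast xs, last xs)"])
  qed
qed (auto simp: Hs_def)

lemma sum_Hs_Suc: "(\<Sum>ks\<in>Hs A (Suc n). f ks) = (\<Sum>ks\<in>Hs A n. \<Sum>k\<in>{1..A}. f (ks@[k]))"
proof -
  have inj: "inj_on (\<lambda>(ks,k). ks@[k]) (Hs A n \<times> {1..A})"
    by (auto simp: inj_on_def)
  show ?thesis
    unfolding Hs_Suc sum.reindex[OF inj] sum.cartesian_product
    by (simp add: case_prod_unfold)
qed



locale urn =
  fixes A :: nat and F :: "nat \<Rightarrow> nat \<Rightarrow> real" and M :: "'w measure"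
    and X :: "nat \<Rightarrow> 'w \<Rightarrow> (nat \<Rightarrow> nat)" and x0 :: "nat \<Rightarrow> nat"
  assumes urn: "is_urn_process A F M X x0"
    and Fpos: "\<And>j k. j \<in> {1..A} \<Longrightarrow> k \<ge> 1 \<Longrightarrow> F j k > 0"
    and x0pos: "\<And>j. j \<in> {1..A} \<Longrightarrow> x0 j \<ge> 1"
    and Apos: "A \<ge> 1"
begin

sublocale prob_space M using urn by (simp add: is_urn_process_def)

lemma Xmeas[measurable]: "X n \<in> measurable M (count_space UNIV)"
  using urn by (simp add: is_urn_process_def)

definition cyl :: "nat list \<Rightarrow> 'w set" where
  "cyl ks = {\<omega>\<in>space M. \<forall>m\<le>length ks. X m \<omega> = pathf x0 ks m}"

lemma cyl_sets[measurable]: "cyl ks \<in> sets M"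
  unfolding cyl_def by measurable

definition valid :: "(nat \<Rightarrow> nat) \<Rightarrow> bool" where
  "valid x \<longleftrightarrow> (\<forall>l. x0 l \<le> x l)"

lemma valid_pathf: "valid (pathf x0 ks m)"
  by (simp add: valid_def pathf_ge)

lemma valid_Fpos: "valid x \<Longrightarrow> j \<in> {1..A} \<Longrightarrow> F j (x j) > 0"
  using Fpos x0pos unfolding valid_def by (meson order_trans)

lemma S_pos: "valid x \<Longrightarrow> (\<Sum>j=1..A. F j (x j)) > 0"
proof -
  assume v: "valid x"
  have "1 \<in> {1..A}" using Apos by auto
  then show ?thesis using valid_Fpos[OF v]
    by (intro sum_pos) auto
qed

lemma urn_prob_nonneg: "valid x \<Longrightarrow> k \<in> {1..A} \<Longrightarrow> urn_prob A F x k \<ge> 0"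
  unfolding urn_prob_def using S_pos valid_Fpos by (simp add: less_imp_le)

lemma urn_prob_sum: "valid x \<Longrightarrow> (\<Sum>k\<in>{1..A}. urn_prob A F x k) = 1"
proof -
  assume v: "valid x"
  have "(\<Sum>j=1..A. F j (x j)) > 0" using S_pos[OF v] .
  then show ?thesis unfolding urn_prob_def by (simp add: sum_divide_distrib[symmetric])
qed

lemma cyl_snoc: "ks \<in> Hs A n \<Longrightarrow> cyl (ks@[k]) = {\<omega>\<in>space M. (\<forall>m\<le>n. X m \<omega> = pathf x0 ks m)
     \<and> X (Suc n) \<omega> = (pathf x0 ks n)(k := pathf x0 ks n k + 1)}"
proof -
  assume "ks \<in> Hs A n"
  then have l: "length ks = n" by (simp add: Hs_def)
  show ?thesis
    unfolding cyl_def using l pathf_snoc[of _ ks x0 k] pathf_snoc_last[of x0 ks k]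
    by (auto simp: le_Suc_eq)
qed

lemma cyl_Hs: "ks \<in> Hs A n \<Longrightarrow> cyl ks = {\<omega>\<in>space M. \<forall>m\<le>n. X m \<omega> = pathf x0 ks m}"
  by (simp add: cyl_def Hs_def)

lemma measure_cyl_snoc: "ks \<in> Hs A n \<Longrightarrow> k \<in> {1..A} \<Longrightarrow>
  measure M (cyl (ks@[k])) = measure M (cyl ks) * urn_prob A F (pathf x0 ks n) k"
  using urn unfolding is_urn_process_def cyl_snoc cyl_Hs by blast

lemma cyl_snoc_sub: "cyl (ks@[k]) \<subseteq> cyl ks"
  unfolding cyl_def using pathf_snoc[of _ ks x0 k] by auto

lemma measure_cyl_Nil: "measure M (cyl []) = 1"
  using urn unfolding cyl_def is_urn_process_def by simp

definition Ex :: "nat \<Rightarrow> ((nat\<Rightarrow>nat) \<Rightarrow> real) \<Rightarrow> real" where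
  "Ex n W = (\<Sum>ks\<in>Hs A n. measure M (cyl ks) * W (pathf x0 ks n))"

lemma Ex_Suc_le:
  assumes sup: "\<And>x. valid x \<Longrightarrow> (\<Sum>k\<in>{1..A}. urn_prob A F x k * W (x(k := x k + 1))) \<le> W x"
  shows "Ex (Suc n) W \<le> Ex n W"
proof -
  have "Ex (Suc n) W = (\<Sum>ks\<in>Hs A n. \<Sum>k\<in>{1..A}. measure M (cyl (ks@[k])) * W (pathf x0 (ks@[k]) (Suc n)))"
    unfolding Ex_def sum_Hs_Suc ..
  also have "\<dots> = (\<Sum>ks\<in>Hs A n. measure M (cyl ks) * (\<Sum>k\<in>{1..A}. urn_prob A F (pathf x0 ks n) k *
        W ((pathf x0 ks n)(k := pathf x0 ks n k + 1))))"
  proof (rule sum.cong[OF refl])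
    fix ks assume ks: "ks \<in> Hs A n"
    then have l: "length ks = n" by (simp add: Hs_def)
    show "(\<Sum>k\<in>{1..A}. measure M (cyl (ks@[k])) * W (pathf x0 (ks@[k]) (Suc n))) =
      measure M (cyl ks) * (\<Sum>k\<in>{1..A}. urn_prob A F (pathf x0 ks n) k *
        W ((pathf x0 ks n)(k := pathf x0 ks n k + 1)))"
      unfolding sum_distrib_left
      using measure_cyl_snoc[OF ks] pathf_snoc_last[of x0 ks] l
      by (intro sum.cong) auto
  qed
  also have "\<dots> \<le> (\<Sum>ks\<in>Hs A n. measure M (cyl ks) * W (pathf x0 ks n))"
    by (intro sum_mono mult_left_mono sup valid_pathf) auto
  finally show ?thesis unfolding Ex_def .
qed

lemma Ex_le:
  assumes sup: "\<And>x. valid x \<Longrightarrow> (\<Sum>k\<in>{1..A}. urn_prob A F x k * W (x(k := x k + 1))) \<le> W x"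
  shows "Ex n W \<le> W x0"
proof (induction n)
  case 0
  then show ?case by (simp add: Ex_def Hs_0 measure_cyl_Nil)
next
  case (Suc n)
  then show ?case using Ex_Suc_le[OF sup, of n] by linarith
qed

definition U :: "nat \<Rightarrow> 'w set" where
  "U n = (\<Union>ks\<in>Hs A n. cyl ks)"

lemma U_sets[measurable]: "U n \<in> sets M"
  unfolding U_def using finite_Hs by (intro sets.finite_UN) auto

lemma cyl_rest_null:
  assumes ks: "ks \<in> Hs A n"
  shows "measure M (cyl ks - (\<Union>k\<in>{1..A}. cyl (ks@[k]))) = 0"
proof -
  have disj: "disjoint_family_on (\<lambda>k. cyl (ks@[k])) {1..A}"
  proof (unfold disjoint_family_on_def, intro ballI impI)
    fix k k' assume "k \<in> {1..A}" "k' \<in> {1..A}" "k \<noteq> k'"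
    show "cyl (ks@[k]) \<inter> cyl (ks@[k']) = {}"
    proof (rule ccontr)
      assume "cyl (ks@[k]) \<inter> cyl (ks@[k']) \<noteq> {}"
      then obtain \<omega> where "\<omega> \<in> cyl (ks@[k])" "\<omega> \<in> cyl (ks@[k'])" by blast
      then have "(pathf x0 ks n)(k := pathf x0 ks n k + 1) = (pathf x0 ks n)(k' := pathf x0 ks n k' + 1)"
        using cyl_snoc[OF ks] by auto
      then have "((pathf x0 ks n)(k := pathf x0 ks n k + 1)) k = ((pathf x0 ks n)(k' := pathf x0 ks n k' + 1)) k"
        by simp
      then show False using \<open>k \<noteq> k'\<close> by simp
    qed
  qed
  have "measure M (cyl ks - (\<Union>k\<in>{1..A}. cyl (ks@[k]))) = measure M (cyl ks) - measure M (\<Union>k\<in>{1..A}. cyl (ks@[k]))"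
    by (rule finite_measure_Diff) (auto intro: cyl_snoc_sub[THEN subsetD])
  also have "measure M (\<Union>k\<in>{1..A}. cyl (ks@[k])) = (\<Sum>k\<in>{1..A}. measure M (cyl (ks@[k])))"
    by (rule finite_measure_finite_Union) (use disj in auto)
  also have "\<dots> = measure M (cyl ks) * (\<Sum>k\<in>{1..A}. urn_prob A F (pathf x0 ks n) k)"
    using measure_cyl_snoc[OF ks] by (simp add: sum_distrib_left)
  also have "\<dots> = measure M (cyl ks)" using urn_prob_sum[OF valid_pathf] by simp
  finally show ?thesis by simp
qed

lemma U_null: "measure M (space M - U n) = 0"
proof (induction n)
  case 0
  have "U 0 = cyl []" by (simp add: U_def Hs_0)
  then show ?case using measure_cyl_Nil prob_space finite_measure_compl[OF cyl_sets] by simp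
next
  case (Suc n)
  have sub: "space M - U (Suc n) \<subseteq> (space M - U n) \<union> (\<Union>ks\<in>Hs A n. cyl ks - (\<Union>k\<in>{1..A}. cyl (ks@[k])))"
    unfolding U_def Hs_Suc by auto
  have "measure M (space M - U (Suc n)) \<le> measure M ((space M - U n) \<union> (\<Union>ks\<in>Hs A n. cyl ks - (\<Union>k\<in>{1..A}. cyl (ks@[k]))))"
    by (rule finite_measure_mono[OF sub]) (use finite_Hs in auto)
  also have "\<dots> \<le> measure M (space M - U n) + measure M (\<Union>ks\<in>Hs A n. cyl ks - (\<Union>k\<in>{1..A}. cyl (ks@[k])))"
    by (rule measure_Un_le) (use finite_Hs in auto)
  also have "measure M (\<Union>ks\<in>Hs A n. cyl ks - (\<Union>k\<in>{1..A}. cyl (ks@[k]))) \<le> (\<Sum>ks\<in>Hs A n. measure M (cyl ks - (\<Union>k\<in>{1..A}. cyl (ks@[k]))))"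
    by (rule measure_UNION_le) (use finite_Hs in auto)
  also have "\<dots> = 0" using cyl_rest_null by simp
  finally show ?case using Suc measure_nonneg[of M "space M - U (Suc n)"] by linarith
qed

lemma markov:
  assumes sup: "\<And>x. valid x \<Longrightarrow> (\<Sum>k\<in>{1..A}. urn_prob A F x k * W (x(k := x k + 1))) \<le> W x"
    and nn: "\<And>x. valid x \<Longrightarrow> W x \<ge> 0" and t: "t > 0"
  shows "measure M {\<omega>\<in>space M. t \<le> W (X n \<omega>)} \<le> W x0 / t"
proof -
  let ?H = "{ks\<in>Hs A n. t \<le> W (pathf x0 ks n)}"
  have fH: "finite ?H" using finite_Hs by auto
  have sub: "{\<omega>\<in>space M. t \<le> W (X n \<omega>)} \<subseteq> (space M - U n) \<union> (\<Union>ks\<in>?H. cyl ks)"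
    unfolding U_def by (auto simp: cyl_Hs)
  have "measure M {\<omega>\<in>space M. t \<le> W (X n \<omega>)} \<le> measure M ((space M - U n) \<union> (\<Union>ks\<in>?H. cyl ks))"
    by (rule finite_measure_mono[OF sub]) (use fH in auto)
  also have "\<dots> \<le> measure M (space M - U n) + measure M (\<Union>ks\<in>?H. cyl ks)"
    by (rule measure_Un_le) (use fH in auto)
  also have "measure M (\<Union>ks\<in>?H. cyl ks) \<le> (\<Sum>ks\<in>?H. measure M (cyl ks))"
    by (rule measure_UNION_le) (use fH in auto)
  also have "\<dots> \<le> (\<Sum>ks\<in>?H. measure M (cyl ks) * (W (pathf x0 ks n) / t))"
  proof (rule sum_mono)
    fix ks assume "ks \<in> ?H"
    then have "1 \<le> W (pathf x0 ks n) / t" using t by simp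
    then show "measure M (cyl ks) \<le> measure M (cyl ks) * (W (pathf x0 ks n) / t)"
      using mult_left_mono[of 1 "W (pathf x0 ks n) / t" "measure M (cyl ks)"] by simp
  qed
  also have "\<dots> \<le> (\<Sum>ks\<in>Hs A n. measure M (cyl ks) * (W (pathf x0 ks n) / t))"
    by (rule sum_mono2) (use finite_Hs nn valid_pathf t in auto)
  also have "\<dots> = Ex n W / t" unfolding Ex_def by (simp add: sum_divide_distrib)
  also have "\<dots> \<le> W x0 / t" using Ex_le[OF sup] t by (simp add: divide_right_mono)
  finally show ?thesis using U_null by simp
qed

definition G :: "'w set" where "G = (\<Inter>n. U n)"

lemma G_null: "measure M (space M - G) = 0"
proof -
  have "space M - G = (\<Union>n. space M - U n)" unfolding G_def by auto
  moreover have "range (\<lambda>n. space M - U n) \<subseteq> sets M" by auto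
  ultimately show ?thesis using measure_countably_zero[of "\<lambda>n. space M - U n"] U_null by auto
qed

lemma G_sets[measurable]: "G \<in> sets M" unfolding G_def by measurable

lemma G_valid: "\<omega> \<in> G \<Longrightarrow> valid (X n \<omega>)"
proof -
  assume "\<omega> \<in> G"
  then obtain ks where ks: "ks \<in> Hs A n" "\<omega> \<in> cyl ks" unfolding G_def U_def by blast
  then have "X n \<omega> = pathf x0 ks n" by (auto simp: cyl_Hs)
  then show ?thesis using valid_pathf by simp
qed

lemma G_step: "\<omega> \<in> G \<Longrightarrow> X n \<omega> j \<le> X (Suc n) \<omega> j"
proof -
  assume "\<omega> \<in> G"
  then obtain ks where ks: "ks \<in> Hs A (Suc n)" "\<omega> \<in> cyl ks" unfolding G_def U_def by blast
  then have "X n \<omega> = pathf x0 ks n" "X (Suc n) \<omega> = pathf x0 ks (Suc n)" by (auto simp: cyl_Hs)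
  then show ?thesis using pathf_mono[of n "Suc n"] by simp
qed

lemma G_mono: "\<omega> \<in> G \<Longrightarrow> n \<le> n' \<Longrightarrow> X n \<omega> j \<le> X n' \<omega> j"
  using lift_Suc_mono_le[of "\<lambda>n. X n \<omega> j"] G_step by blast

end


context urn begin

definition Bad :: "nat \<Rightarrow> 'w set" where
  "Bad j = {\<omega>\<in>space M. \<forall>B. \<exists>n. B < X n \<omega> j}"

lemma pred_sets: "{\<omega>\<in>space M. P (X n \<omega>)} \<in> sets M"
proof -
  have "{\<omega>\<in>space M. P (X n \<omega>)} = X n -` {x. P x} \<inter> space M" by auto
  then show ?thesis using measurable_sets[OF Xmeas, of "{x. P x}" n] by simp
qed

lemma Bad_sets[measurable]: "Bad j \<in> sets M"
proof -
  have "Bad j = (\<Inter>B. \<Union>n. {\<omega>\<in>space M. B < X n \<omega> j})" by (auto simp: Bad_def)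
  also have "\<dots> \<in> sets M"
  proof -
    have "(\<Union>n. {\<omega>\<in>space M. B < X n \<omega> j}) \<in> sets M" for B :: nat
      using pred_sets[of "\<lambda>x. B < x j"] by blast
    then show ?thesis by blast
  qed
  finally show ?thesis .
qed

lemma bad_bound:
  assumes sup: "\<And>x. valid x \<Longrightarrow> (\<Sum>k\<in>{1..A}. urn_prob A F x k * W (x(k := x k + 1))) \<le> W x"
    and nn: "\<And>x. valid x \<Longrightarrow> W x \<ge> 0" and t: "t > 0"
    and thr: "\<And>x. valid x \<Longrightarrow> K \<le> x j \<Longrightarrow> t \<le> W x"
  shows "measure M (Bad j) \<le> W x0 / t"
proof -
  define An where "An n = {\<omega>\<in>space M. t \<le> W (X n \<omega>)}" for n
  define Bn where "Bn N = (\<Inter>n\<in>{N..}. An n)" for N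
  have An_sets: "An n \<in> sets M" for n unfolding An_def by (rule pred_sets)
  have Bn_sets: "Bn N \<in> sets M" for N unfolding Bn_def
    using An_sets by (intro sets.countable_INT') auto
  have Bn_le: "measure M (Bn N) \<le> W x0 / t" for N
  proof -
    have "Bn N \<subseteq> An N" unfolding Bn_def by auto
    then have "measure M (Bn N) \<le> measure M (An N)" using An_sets by (intro finite_measure_mono) auto
    also have "\<dots> \<le> W x0 / t" unfolding An_def by (rule markov[OF sup nn t])
    finally show ?thesis .
  qed
  have inc: "incseq Bn" unfolding Bn_def incseq_def by auto
  have lim: "(\<lambda>N. measure M (Bn N)) \<longlonglongrightarrow> measure M (\<Union>N. Bn N)"
    using Bn_sets inc by (intro finite_Lim_measure_incseq) auto
  have U_le: "measure M (\<Union>N. Bn N) \<le> W x0 / t"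
    using lim Bn_le by (intro LIMSEQ_le_const2[OF lim]) auto
  have sub: "Bad j \<subseteq> (space M - G) \<union> (\<Union>N. Bn N)"
  proof
    fix \<omega> assume b: "\<omega> \<in> Bad j"
    show "\<omega> \<in> (space M - G) \<union> (\<Union>N. Bn N)"
    proof (cases "\<omega> \<in> G")
      case True
      from b obtain n0 where n0: "K < X n0 \<omega> j" unfolding Bad_def by blast
      have "\<omega> \<in> Bn n0"
        unfolding Bn_def An_def
      proof (intro INT_I CollectI conjI)
        fix n assume "n \<in> {n0..}"
        then have "X n0 \<omega> j \<le> X n \<omega> j" using G_mono[OF True] by auto
        then show "t \<le> W (X n \<omega>)" using thr[OF G_valid[OF True]] n0 by simp
      qed (use b in \<open>auto simp: Bad_def\<close>)
      then show ?thesis by blast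
    next
      case False
      then show ?thesis using b by (auto simp: Bad_def)
    qed
  qed
  have "measure M (Bad j) \<le> measure M ((space M - G) \<union> (\<Union>N. Bn N))"
    by (rule finite_measure_mono[OF sub]) (use Bn_sets in auto)
  also have "\<dots> \<le> measure M (space M - G) + measure M (\<Union>N. Bn N)"
    by (rule measure_Un_le) (use Bn_sets in auto)
  finally show ?thesis using G_null U_le by simp
qed

end


definition R :: "(nat \<Rightarrow> nat \<Rightarrow> real) \<Rightarrow> nat \<Rightarrow> nat \<Rightarrow> real" where
  "R F j m = (\<Sum>l. 1 / F j (l + m))"

definition T :: "(nat \<Rightarrow> nat \<Rightarrow> real) \<Rightarrow> nat \<Rightarrow> nat \<Rightarrow> real" where
  "T F j m = (\<Sum>l. (1 / F j (l + m))^2)"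

locale tailF =
  fixes F :: "nat \<Rightarrow> nat \<Rightarrow> real" and j :: nat
  assumes pos: "\<And>k. k \<ge> 1 \<Longrightarrow> F j k > 0"
    and M: "condM F j"
begin

lemma summ0: "summable (\<lambda>k. 1 / F j k)"
proof -
  have "summable (\<lambda>k. 1 / F j (k + 1))" using M unfolding condM_def by simp
  then show ?thesis using summable_iff_shift[of "\<lambda>k. 1 / F j k" 1] by simp
qed

lemma summ: "summable (\<lambda>l. 1 / F j (l + m))"
  using summ0 summable_iff_shift[of "\<lambda>k. 1 / F j k" m] by simp

lemma inv_nonneg: "m \<ge> 1 \<Longrightarrow> 1 / F j m \<ge> 0"
  using pos[of m] by simp

lemma R_step: "R F j m = 1 / F j m + R F j (Suc m)"
proof -
  have "(\<Sum>l. 1 / F j (Suc l + m)) = (\<Sum>l. 1 / F j (l + m)) - 1 / F j (0 + m)"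
    using suminf_split_head[OF summ[of m]] by simp
  then show ?thesis unfolding R_def by simp
qed

lemma R_nonneg: "m \<ge> 1 \<Longrightarrow> R F j m \<ge> 0"
  unfolding R_def using summ inv_nonneg by (intro suminf_nonneg) auto

lemma R_pos: "m \<ge> 1 \<Longrightarrow> R F j m > 0"
  unfolding R_def using summ pos by (intro suminf_pos) auto

lemma R_antimono: assumes "1 \<le> m" "m \<le> m'" shows "R F j m' \<le> R F j m"
  using assms(2)
proof (induction m' rule: dec_induct)
  case base then show ?case by simp
next
  case (step n)
  then show ?case using R_step[of n] inv_nonneg[of n] assms(1) by linarith
qed

lemma R_small: "r > 0 \<Longrightarrow> \<exists>K. \<forall>m\<ge>K. R F j m < r"
  using suminf_exist_split[of r "\<lambda>k. 1 / F j k"] summ0 unfolding R_def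
  by (metis abs_less_iff real_norm_def)

lemma sq_summ: "summable (\<lambda>l. (1 / F j (l + m))^2)"
proof -
  have lim: "(\<lambda>l. 1 / F j (l + m)) \<longlonglongrightarrow> 0" using summable_LIMSEQ_zero[OF summ[of m]] .
  have ev: "eventually (\<lambda>l. norm (1 / F j (l + m)) < 1) sequentially"
    using lim by (simp add: tendsto_iff)
  have "eventually (\<lambda>l. norm ((1 / F j (l + m))^2) \<le> 1 / F j (l + m)) sequentially"
    using ev eventually_ge_at_top[of 1]
  proof eventually_elim
    case (elim l)
    have "0 \<le> 1 / F j (l + m)" using inv_nonneg[of "l+m"] elim by simp
    moreover have "1 / F j (l + m) < 1" using elim by (metis abs_ge_self le_less_trans real_norm_def)
    ultimately have "(1 / F j (l + m)) * (1 / F j (l + m)) \<le> (1 / F j (l + m)) * 1"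
      by (intro mult_left_mono) auto
    then show ?case by (simp add: power2_eq_square)
  qed
  then show ?thesis using summ[of m] by (rule summable_comparison_test_ev)
qed

lemma T_step: "T F j m = (1 / F j m)^2 + T F j (Suc m)"
proof -
  have "(\<Sum>l. (1 / F j (Suc l + m))^2) = (\<Sum>l. (1 / F j (l + m))^2) - (1 / F j (0 + m))^2"
    using suminf_split_head[OF sq_summ[of m]] by simp
  then show ?thesis unfolding T_def by simp
qed

lemma T_nonneg: "T F j m \<ge> 0"
  unfolding T_def using sq_summ by (intro suminf_nonneg) auto

lemma T_small:
  assumes P: "typeP F j" and e: "e > 0"
  shows "\<exists>K. \<forall>m\<ge>K. T F j m \<le> e * (R F j m)^2"
proof -
  have fl: "filterlim (\<lambda>k. F j k * R F j k) at_top sequentially"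
    using P unfolding typeP_def R_def by simp
  then have "eventually (\<lambda>k. F j k * R F j k \<ge> 1 / e) sequentially"
    by (simp add: filterlim_at_top)
  then obtain K0 where K0: "\<And>k. k \<ge> K0 \<Longrightarrow> F j k * R F j k \<ge> 1 / e"
    by (auto simp: eventually_at_top_linorder)
  define K where "K = max K0 1"
  have key: "1 / F j k \<le> e * R F j k" if "k \<ge> K" for k
  proof -
    have Fk: "F j k > 0" using pos that K_def by auto
    have "1 / e \<le> F j k * R F j k" using K0 that K_def by auto
    then have "1 \<le> e * (F j k * R F j k)" using e by (simp add: field_simps)
    then show ?thesis using Fk by (simp add: field_simps)
  qed
  have "T F j m \<le> e * (R F j m)^2" if m: "m \<ge> K" for m
  proof -
    have "(1 / F j (l + m))^2 \<le> (e * R F j m) * (1 / F j (l + m))" for l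
    proof -
      have a: "0 \<le> 1 / F j (l + m)" using inv_nonneg[of "l+m"] m K_def by simp
      have "1 / F j (l + m) \<le> e * R F j (l + m)" using key[of "l+m"] m by simp
      also have "\<dots> \<le> e * R F j m" using R_antimono[of m "l+m"] m K_def e by simp
      finally have b: "1 / F j (l + m) \<le> e * R F j m" .
      have "(1 / F j (l + m)) * (1 / F j (l + m)) \<le> (e * R F j m) * (1 / F j (l + m))"
        by (rule mult_right_mono[OF b a])
      then show ?thesis by (metis power2_eq_square)
    qed
    then have "T F j m \<le> (\<Sum>l. (e * R F j m) * (1 / F j (l + m)))"
      unfolding T_def using sq_summ summ by (intro suminf_le summable_mult) auto
    also have "\<dots> = e * (R F j m)^2"
      using suminf_mult[OF summ[of m], of "e * R F j m"] by (simp add: R_def power2_eq_square)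
    finally show ?thesis .
  qed
  then show ?thesis by blast
qed

end

lemma partial_unbounded:
  fixes f :: "nat \<Rightarrow> real"
  assumes nn: "\<And>n. f n \<ge> 0" and ns: "\<not> summable f"
  shows "\<exists>K. (\<Sum>l<K. f l) \<ge> C"
proof (rule ccontr)
  assume "\<not> ?thesis"
  then have "\<And>K. (\<Sum>l<K. f l) \<le> C" by (simp add: not_le less_imp_le)
  then have "summable f" using nn by (intro summableI_nonneg_bounded) auto
  then show False using ns by simp
qed



lemma sum_two:
  assumes "finite S" "i \<in> S" "j \<in> S" "i \<noteq> j" "\<And>k. k \<in> S \<Longrightarrow> k \<noteq> i \<Longrightarrow> k \<noteq> j \<Longrightarrow> g k = 0"
  shows "sum g S = g i + g j"
proof -
  have "sum g S = sum g {i,j}"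
    using assms by (intro sum.mono_neutral_right) auto
  then show ?thesis using assms by simp
qed

context urn begin

lemma super_two:
  assumes ij: "i \<in> {1..A}" "j \<in> {1..A}" "i \<noteq> j"
    and step: "\<And>x. valid x \<Longrightarrow> F i (x i) * (\<Phi> (x i + 1) (x j) - \<Phi> (x i) (x j))
        + F j (x j) * (\<Phi> (x i) (x j + 1) - \<Phi> (x i) (x j)) \<le> 0"
    and v: "valid x"
  shows "(\<Sum>k\<in>{1..A}. urn_prob A F x k * (\<lambda>x. \<Phi> (x i) (x j)) (x(k := x k + 1))) \<le> (\<lambda>x. \<Phi> (x i) (x j)) x"
proof -
  define S where "S = (\<Sum>j=1..A. F j (x j))"
  have S: "S > 0" using S_pos[OF v] S_def by simp
  let ?W = "\<lambda>x. \<Phi> (x i) (x j)"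
  have "(\<Sum>k\<in>{1..A}. urn_prob A F x k * ?W (x(k := x k + 1))) =
      (\<Sum>k\<in>{1..A}. urn_prob A F x k * ?W x) + (\<Sum>k\<in>{1..A}. urn_prob A F x k * (?W (x(k := x k + 1)) - ?W x))"
    by (simp add: sum.distrib[symmetric] algebra_simps)
  also have "(\<Sum>k\<in>{1..A}. urn_prob A F x k * ?W x) = ?W x"
    using urn_prob_sum[OF v] by (simp add: sum_distrib_right[symmetric])
  also have "(\<Sum>k\<in>{1..A}. urn_prob A F x k * (?W (x(k := x k + 1)) - ?W x)) =
      urn_prob A F x i * (\<Phi> (x i + 1) (x j) - \<Phi> (x i) (x j)) +
      urn_prob A F x j * (\<Phi> (x i) (x j + 1) - \<Phi> (x i) (x j))"
    using ij by (subst sum_two[of _ i j]) auto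
  also have "\<dots> = (F i (x i) * (\<Phi> (x i + 1) (x j) - \<Phi> (x i) (x j))
        + F j (x j) * (\<Phi> (x i) (x j + 1) - \<Phi> (x i) (x j))) / S"
    unfolding urn_prob_def S_def by (simp add: add_divide_distrib)
  also have "\<dots> \<le> 0" using step[OF v] S by (simp add: divide_nonpos_pos)
  finally show ?thesis by simp
qed

lemma bound_M:
  assumes ij: "i \<in> {1..A}" "j \<in> {1..A}" "i \<noteq> j"
    and Mi: "condM F i" and Mj: "condM F j"
    and D0: "D0 = R F j (x0 j) - R F i (x0 i)" "D0 > 0"
  shows "measure M (Bad j) \<le> 4 * (T F j (x0 j) + T F i (x0 i)) / D0^2"
proof -
  interpret ti: tailF F i using Fpos ij Mi by unfold_locales auto
  interpret tj: tailF F j using Fpos ij Mj by unfold_locales auto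
  define \<Phi> where "\<Phi> a b = (R F j b - R F i a - D0)^2 + T F j b + T F i a" for a b
  let ?W = "\<lambda>x. \<Phi> (x i) (x j)"
  have vi: "valid x \<Longrightarrow> x i \<ge> 1" for x using x0pos[OF ij(1)] unfolding valid_def by (meson order_trans)
  have vj: "valid x \<Longrightarrow> x j \<ge> 1" for x using x0pos[OF ij(2)] unfolding valid_def by (meson order_trans)
  have step: "F i (x i) * (\<Phi> (x i + 1) (x j) - \<Phi> (x i) (x j))
        + F j (x j) * (\<Phi> (x i) (x j + 1) - \<Phi> (x i) (x j)) \<le> 0" if v: "valid x" for x
  proof -
    define a where "a = x i"
    define b where "b = x j"
    have Fa: "F i a > 0" using Fpos ij vi[OF v] a_def by auto
    have Fb: "F j b > 0" using Fpos ij vj[OF v] b_def by auto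
    define Y where "Y = R F j b - R F i a - D0"
    have e1: "\<Phi> (a + 1) b - \<Phi> a b = 2 * Y * (1 / F i a)"
      unfolding \<Phi>_def Y_def using ti.R_step[of a] ti.T_step[of a]
      by (simp add: power2_eq_square algebra_simps)
    have e2: "\<Phi> a (b + 1) - \<Phi> a b = - 2 * Y * (1 / F j b)"
      unfolding \<Phi>_def Y_def using tj.R_step[of b] tj.T_step[of b]
      by (simp add: power2_eq_square algebra_simps)
    have "F i a * (\<Phi> (a + 1) b - \<Phi> a b) + F j b * (\<Phi> a (b + 1) - \<Phi> a b) = 0"
      unfolding e1 e2 using Fa Fb by (simp add: field_simps)
    then show ?thesis unfolding a_def b_def by simp
  qed
  have sup: "(\<Sum>k\<in>{1..A}. urn_prob A F x k * ?W (x(k := x k + 1))) \<le> ?W x" if "valid x" for x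
    using super_two[OF ij step that] by simp
  have nn: "?W x \<ge> 0" if "valid x" for x
    unfolding \<Phi>_def using ti.T_nonneg tj.T_nonneg by (simp add: add_nonneg_nonneg)
  have t: "D0^2 / 4 > 0" using D0 by simp
  obtain K where K: "\<And>m. m \<ge> K \<Longrightarrow> R F j m < D0 / 2" using tj.R_small[of "D0/2"] D0 by auto
  have thr: "D0^2 / 4 \<le> ?W x" if v: "valid x" and xK: "K \<le> x j" for x
  proof -
    have "R F j (x j) < D0 / 2" using K xK by simp
    moreover have "R F i (x i) \<ge> 0" using ti.R_nonneg vi[OF v] by simp
    ultimately have "R F j (x j) - R F i (x i) - D0 < - (D0 / 2)" by simp
    have "(D0/2)^2 \<le> (-(R F j (x j) - R F i (x i) - D0))^2"
      by (rule power_mono) (use D0(2) \<open>R F j (x j) - R F i (x i) - D0 < - (D0 / 2)\<close> in linarith)+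
    then have "(D0/2)^2 \<le> (R F j (x j) - R F i (x i) - D0)^2" by (simp add: power2_commute)
    moreover have "(D0/2)^2 = D0^2/4" by (simp add: power_divide)
    ultimately show ?thesis unfolding \<Phi>_def using ti.T_nonneg[of "x i"] tj.T_nonneg[of "x j"]
      by linarith
  qed
  have "measure M (Bad j) \<le> ?W x0 / (D0^2 / 4)"
    by (rule bad_bound[OF sup nn t thr])
  also have "?W x0 = T F j (x0 j) + T F i (x0 i)" unfolding \<Phi>_def D0 by simp
  finally show ?thesis by (simp add: algebra_simps)
qed

end


context urn begin

lemma bound_nonM:
  assumes ij: "i \<in> {1..A}" "j \<in> {1..A}" "i \<noteq> j"
    and Mi: "condM F i" and nMj: "\<not> condM F j"
  shows "measure M (Bad j) = 0"
proof -
  interpret ti: tailF F i using Fpos ij Mi by unfold_locales auto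
  define f where "f l = 1 / F j (l + x0 j)" for l
  define g where "g l = 1 / F i (l + x0 i)" for l
  have x0i: "x0 i \<ge> 1" and x0j: "x0 j \<ge> 1" using x0pos ij by auto
  have fnn: "f l \<ge> 0" for l unfolding f_def using Fpos[OF ij(2), of "l + x0 j"] x0j by simp
  have gnn: "g l \<ge> 0" for l unfolding g_def using Fpos[OF ij(1), of "l + x0 i"] x0i by simp
  have gs: "summable g" unfolding g_def by (rule ti.summ)
  have Rg: "R F i (x0 i) = suminf g" unfolding R_def g_def ..
  have fns: "\<not> summable f"
  proof
    assume "summable f"
    then have "summable (\<lambda>k. 1 / F j k)"
      unfolding f_def using summable_iff_shift[of "\<lambda>k. 1 / F j k" "x0 j"] by simp
    then have "summable (\<lambda>k. 1 / F j (k + 1))" using summable_iff_shift[of "\<lambda>k. 1 / F j k" 1] by simp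
    then show False using nMj unfolding condM_def by simp
  qed
  have le_e: "measure M (Bad j) \<le> e" if e: "e > 0" for e
  proof -
    define C where "C = R F i (x0 i) / e + 1"
    have Rnn: "R F i (x0 i) \<ge> 0" using ti.R_nonneg x0i by simp
    have C: "C > 0" using Rnn e C_def by (simp add: add_nonneg_pos)
    obtain K' where K': "(\<Sum>l<K'. f l) \<ge> C" using partial_unbounded[OF fnn fns] by blast
    define K where "K = K' + x0 j"
    define \<Phi> where "\<Phi> a b = (\<Sum>l<min b K - x0 j. f l) - (\<Sum>l<a - x0 i. g l) + R F i (x0 i)" for a b
    let ?W = "\<lambda>x. \<Phi> (x i) (x j)"
    have step: "F i (x i) * (\<Phi> (x i + 1) (x j) - \<Phi> (x i) (x j))
        + F j (x j) * (\<Phi> (x i) (x j + 1) - \<Phi> (x i) (x j)) \<le> 0" if v: "valid x" for x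
    proof -
      define a where "a = x i"
      define b where "b = x j"
      have a: "a \<ge> x0 i" and b: "b \<ge> x0 j" using v unfolding valid_def a_def b_def by auto
      have Fa: "F i a > 0" using Fpos ij a x0i by auto
      have Fb: "F j b > 0" using Fpos ij b x0j by auto
      have "(a + 1) - x0 i = Suc (a - x0 i)" using a by simp
      then have e1: "\<Phi> (a + 1) b - \<Phi> a b = - (1 / F i a)"
        unfolding \<Phi>_def g_def using a by simp
      have e2: "\<Phi> a (b + 1) - \<Phi> a b \<le> 1 / F j b"
      proof (cases "b < K")
        case True
        then have "min (b+1) K - x0 j = Suc (min b K - x0 j)" "min b K = b" using b by auto
        then show ?thesis unfolding \<Phi>_def f_def using b by (simp add: Suc_diff_le)
      next
        case False
        then have "min (b+1) K = min b K" by simp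
        then show ?thesis unfolding \<Phi>_def using Fb by simp
      qed
      have "F i a * (\<Phi> (a + 1) b - \<Phi> a b) = -1" unfolding e1 using Fa by simp
      moreover have "F j b * (\<Phi> a (b + 1) - \<Phi> a b) \<le> F j b * (1 / F j b)"
        using e2 Fb by (intro mult_left_mono) auto
      moreover have "F j b * (1 / F j b) = 1" using Fb by simp
      ultimately show ?thesis unfolding a_def b_def by linarith
    qed
    have sup: "(\<Sum>k\<in>{1..A}. urn_prob A F x k * ?W (x(k := x k + 1))) \<le> ?W x" if "valid x" for x
      using super_two[OF ij step that] by simp
    have gle: "(\<Sum>l<n. g l) \<le> R F i (x0 i)" for n
      unfolding Rg using gs gnn by (intro sum_le_suminf) auto
    have fge: "(\<Sum>l<n. f l) \<ge> 0" for n using fnn by (intro sum_nonneg) auto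
    have nn: "?W x \<ge> 0" if "valid x" for x
      unfolding \<Phi>_def using gle[of "x i - x0 i"] fge[of "min (x j) K - x0 j"] by linarith
    have thr: "C \<le> ?W x" if v: "valid x" and xK: "K \<le> x j" for x
    proof -
      have "min (x j) K - x0 j = K'" using xK K_def by simp
      then show ?thesis unfolding \<Phi>_def using gle[of "x i - x0 i"] K' by simp
    qed
    have "measure M (Bad j) \<le> ?W x0 / C"
      by (rule bad_bound[OF sup nn C thr])
    also have "?W x0 = R F i (x0 i)" unfolding \<Phi>_def using x0j by simp
    also have "R F i (x0 i) / C \<le> e"
    proof -
      have "R F i (x0 i) \<le> e * C" unfolding C_def using e by (simp add: field_simps)
      then show ?thesis using C by (simp add: divide_le_eq mult.commute)
    qed
    finally show ?thesis .
  qed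
  have "measure M (Bad j) \<le> 0"
  proof (rule ccontr)
    assume "\<not> measure M (Bad j) \<le> 0"
    then have "measure M (Bad j) > 0" by simp
    then show False using le_e[of "measure M (Bad j) / 2"] by simp
  qed
  then show ?thesis using measure_nonneg[of M "Bad j"] by simp
qed

end


context urn begin

lemma Bad_eq: "Bad j = {\<omega>\<in>space M. \<forall>B. \<exists>n. B < X n \<omega> j}" by (simp add: Bad_def)

lemma sMon_sets: "sMon A i M X \<in> sets M"
proof -
  define f where "f n \<omega> = real (\<Sum>j\<in>{1..A}-{i}. X n \<omega> j)" for n \<omega>
  have fm: "f n \<in> borel_measurable M" for n
  proof -
    have "(\<lambda>x::nat\<Rightarrow>nat. real (\<Sum>j\<in>{1..A}-{i}. x j)) \<in> borel_measurable (count_space UNIV)" by simp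
    from measurable_comp[OF Xmeas this] show ?thesis unfolding f_def by (simp add: o_def)
  qed
  have "sMon A i M X = {\<omega>\<in>space M. Cauchy (\<lambda>n. f n \<omega>)}"
    unfolding sMon_def f_def by (simp add: Cauchy_convergent_iff convergent_def)
  also have "\<dots> \<in> sets M" using fm by (rule sets_Collect_Cauchy)
  finally show ?thesis .
qed

lemma sMon_lower:
  shows "measure M (sMon A i M X) \<ge> 1 - (\<Sum>j\<in>{1..A}-{i}. measure M (Bad j))"
proof -
  let ?J = "{1..A}-{i}"
  have sub: "space M - sMon A i M X \<subseteq> (space M - G) \<union> (\<Union>j\<in>?J. Bad j)"
  proof
    fix \<omega> assume w: "\<omega> \<in> space M - sMon A i M X"
    show "\<omega> \<in> (space M - G) \<union> (\<Union>j\<in>?J. Bad j)"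
    proof (rule ccontr)
      assume "\<not> ?thesis"
      then have g: "\<omega> \<in> G" and nb: "\<And>j. j \<in> ?J \<Longrightarrow> \<omega> \<notin> Bad j" using w by auto
      have "\<forall>j\<in>?J. \<exists>B. \<forall>n. X n \<omega> j \<le> B"
        using nb w by (auto simp: Bad_def not_less)
      then obtain Bf where Bf: "\<And>j n. j \<in> ?J \<Longrightarrow> X n \<omega> j \<le> Bf j" by metis
      define s where "s n = real (\<Sum>j\<in>?J. X n \<omega> j)" for n
      have inc: "incseq s" unfolding s_def incseq_def
        using G_mono[OF g] by (auto intro!: sum_mono)
      have "(\<Sum>j\<in>?J. X n \<omega> j) \<le> (\<Sum>j\<in>?J. Bf j)" for n
        by (rule sum_mono) (rule Bf)
      then have bd: "\<forall>n. s n \<le> real (\<Sum>j\<in>?J. Bf j)" unfolding s_def of_nat_le_iff by blast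
      obtain L where "s \<longlonglongrightarrow> L" using incseq_convergent[OF inc bd] by blast
      then have "\<omega> \<in> sMon A i M X" using w unfolding sMon_def s_def by auto
      then show False using w by simp
    qed
  qed
  have "measure M (space M - sMon A i M X) \<le> measure M ((space M - G) \<union> (\<Union>j\<in>?J. Bad j))"
    by (rule finite_measure_mono[OF sub]) auto
  also have "\<dots> \<le> measure M (space M - G) + measure M (\<Union>j\<in>?J. Bad j)"
    by (rule measure_Un_le) auto
  also have "measure M (\<Union>j\<in>?J. Bad j) \<le> (\<Sum>j\<in>?J. measure M (Bad j))"
    by (rule measure_UNION_le) auto
  finally have "measure M (space M - sMon A i M X) \<le> (\<Sum>j\<in>?J. measure M (Bad j))" using G_null by simp
  moreover have "measure M (space M - sMon A i M X) = 1 - measure M (sMon A i M X)"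
    using prob_compl[OF sMon_sets] by simp
  ultimately show ?thesis by simp
qed

end


lemma init_large:
  assumes c: "chi j > 0"
  shows "eventually (\<lambda>N. urn_init chi N j \<ge> K) sequentially"
proof -
  have "eventually (\<lambda>N. real N \<ge> (real K + 1) / chi j) sequentially"
    using eventually_ge_at_top[of "nat \<lceil>(real K + 1) / chi j\<rceil>"]
    by eventually_elim (meson of_nat_le_iff order_trans real_nat_ceiling_ge)
  then show ?thesis
  proof eventually_elim
    case (elim N)
    then have "chi j * real N \<ge> real K + 1" using c by (simp add: field_simps)
    then have "real_of_int (round (chi j * real N)) \<ge> real K + 1/2"
      using of_int_round_ge[of "chi j * real N"] by linarith
    then have "round (chi j * real N) \<ge> int K" by linarith
    then show ?case unfolding urn_init_def by linarith
  qed
qed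

lemma arith_bound:
  fixes Rj Ri Tj Ti c e :: real
  assumes Rj: "Rj > 0" and Ri: "Ri > 0" and lt: "Ri < c * Rj" and c1: "c < 1"
    and Tj: "0 \<le> Tj" "Tj \<le> e * Rj^2" and Ti: "0 \<le> Ti" "Ti \<le> e * Ri^2" and e: "e > 0"
  shows "4 * (Tj + Ti) / (Rj - Ri)^2 \<le> 8 * e / (1 - c)^2"
proof -
  have "Ri \<le> Rj" using lt c1 Rj by (smt (verit) mult_less_cancel_right1)
  then have "Ri^2 \<le> Rj^2" using Ri by (intro power_mono) auto
  then have "e * Ri^2 \<le> e * Rj^2" using e by (intro mult_left_mono) auto
  then have num: "4 * (Tj + Ti) \<le> 8 * (e * Rj^2)" using Tj Ti by (smt (verit))
  have d: "(1 - c) * Rj \<le> Rj - Ri" using lt by (simp add: algebra_simps)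
  have d0: "(1 - c) * Rj > 0" using c1 Rj by simp
  have den: "((1 - c) * Rj)^2 \<le> (Rj - Ri)^2" using d d0 by (intro power_mono) auto
  have den0: "((1 - c) * Rj)^2 > 0" using c1 Rj by simp
  have "4 * (Tj + Ti) / (Rj - Ri)^2 \<le> 4 * (Tj + Ti) / ((1 - c) * Rj)^2"
  proof (rule divide_left_mono)
    show "((1 - c) * Rj)^2 \<le> (Rj - Ri)^2" by (rule den)
    show "0 \<le> 4 * (Tj + Ti)" using Tj Ti by simp
    have "(Rj - Ri)^2 > 0" using den den0 by linarith
    then show "0 < (Rj - Ri)^2 * ((1 - c) * Rj)^2" using den0 by (rule mult_pos_pos)
  qed
  also have "\<dots> \<le> 8 * (e * Rj^2) / ((1 - c) * Rj)^2"
    using num den0 by (intro divide_right_mono) auto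
  also have "\<dots> = 8 * e / (1 - c)^2" using Rj by (simp add: power_mult_distrib)
  finally show ?thesis .
qed



theorem mainTheorem5:
  fixes A :: nat and F :: "nat \<Rightarrow> nat \<Rightarrow> real" and chi :: "nat \<Rightarrow> real" and i :: nat
    and M :: "nat \<Rightarrow> 'w measure" and X :: "nat \<Rightarrow> nat \<Rightarrow> 'w \<Rightarrow> (nat \<Rightarrow> nat)"
  assumes "A \<ge> 2"
    and "\<forall>j\<in>{1..A}. \<forall>k\<ge>1. F j k > 0"
    and "\<forall>j\<in>{1..A}. typeP F j \<or> \<not> condM F j"
    and "i \<in> {1..A}" and "typeP F i"
    and "\<forall>j\<in>{1..A}. chi j > 0" and "(\<Sum>j=1..A. chi j) = 1"
    and "\<forall>j\<in>{1..A}-{i}.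
           limsup (\<lambda>N. tail_sum F i (urn_init chi N i) / tail_sum F j (urn_init chi N j)) < 1"
    and "\<forall>N. (\<forall>j\<in>{1..A}. urn_init chi N j \<ge> 1) \<longrightarrow>
           is_urn_process A F (M N) (X N) (urn_init chi N)"
  shows "(\<lambda>N. measure (M N) (sMon A i (M N) (X N))) \<longlonglongrightarrow> 1"
proof -
  note A2 = assms(1) and Fp = assms(2) and PM = assms(3) and i = assms(4) and Pi = assms(5)
    and chi = assms(6) and ls = assms(8) and pr = assms(9)
  let ?J = "{1..A}-{i}"
  define x0 where "x0 N = urn_init chi N" for N
  define good where "good N \<longleftrightarrow> (\<forall>j\<in>{1..A}. urn_init chi N j \<ge> 1)" for N
  define BadS where "BadS N j = {\<omega>\<in>space (M N). \<forall>B. \<exists>n. B < X N n \<omega> j}" for N j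
  have ev_good: "eventually good sequentially"
    unfolding good_def using init_large chi by (intro eventually_ball_finite) auto
  have urnN: "urn A F (M N) (X N) (urn_init chi N)" if g: "good N" for N
  proof unfold_locales
    show "is_urn_process A F (M N) (X N) (urn_init chi N)" using pr g unfolding good_def by auto
  qed (use Fp g A2 in \<open>auto simp: good_def\<close>)
  have Mi: "condM F i" using Pi unfolding typeP_def by simp
  interpret ti: tailF F i using Fp i Mi by unfold_locales auto
  have lower: "measure (M N) (sMon A i (M N) (X N)) \<ge> 1 - (\<Sum>j\<in>?J. measure (M N) (BadS N j))"
    if g: "good N" for N
  proof -
    interpret u: urn A F "M N" "X N" "urn_init chi N" by (rule urnN[OF g])
    show ?thesis using u.sMon_lower unfolding u.Bad_eq BadS_def .
  qed
  have upper: "measure (M N) (sMon A i (M N) (X N)) \<le> 1" if g: "good N" for N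
  proof -
    interpret u: urn A F "M N" "X N" "urn_init chi N" by (rule urnN[OF g])
    show ?thesis by (rule u.prob_le_1)
  qed
  have nonM: "measure (M N) (BadS N j) = 0" if g: "good N" and j: "j \<in> ?J" and nj: "\<not> condM F j" for N j
  proof -
    interpret u: urn A F "M N" "X N" "urn_init chi N" by (rule urnN[OF g])
    show ?thesis using u.bound_nonM[of i j] i j Mi nj unfolding u.Bad_eq BadS_def by auto
  qed
  have isM: "measure (M N) (BadS N j) \<le> 4 * (T F j (x0 N j) + T F i (x0 N i)) / (R F j (x0 N j) - R F i (x0 N i))^2"
    if g: "good N" and j: "j \<in> ?J" and mj: "condM F j" and lt: "R F j (x0 N j) - R F i (x0 N i) > 0" for N j
  proof -
    interpret u: urn A F "M N" "X N" "urn_init chi N" by (rule urnN[OF g])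
    show ?thesis using u.bound_M[of i j, OF _ _ _ Mi mj refl] i j lt unfolding u.Bad_eq BadS_def x0_def by auto
  qed
  have lim_j: "(\<lambda>N. measure (M N) (BadS N j)) \<longlonglongrightarrow> 0" if j: "j \<in> ?J" for j
  proof (cases "condM F j")
    case False
    have "eventually (\<lambda>N. measure (M N) (BadS N j) = 0) sequentially" using ev_good
    proof eventually_elim
      case (elim N) show ?case using nonM[OF elim j False] .
    qed
    then show ?thesis by (rule tendsto_eventually)
  next
    case True
    interpret tj: tailF F j using Fp j True by unfold_locales auto
    have Pj: "typeP F j" using PM j True by auto
    show ?thesis unfolding tendsto_iff
    proof (intro allI impI)
      fix e :: real assume e: "e > 0"
      obtain c where c: "limsup (\<lambda>N. tail_sum F i (urn_init chi N i) / tail_sum F j (urn_init chi N j)) < ereal c"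
        "ereal c < 1" using ereal_dense2 ls j by blast
      have c1: "c < 1" using c(2) by simp
      have ev1: "eventually (\<lambda>N. tail_sum F i (urn_init chi N i) / tail_sum F j (urn_init chi N j) < ereal c) sequentially"
        using Limsup_lessD[OF c(1)] .
      define ep where "ep = e * (1 - c)^2 / 16"
      have ep: "ep > 0" unfolding ep_def using e c1 by simp
      obtain Kj where Kj: "\<And>m. m \<ge> Kj \<Longrightarrow> T F j m \<le> ep * (R F j m)^2" using tj.T_small[OF Pj ep] by blast
      obtain Ki where Ki: "\<And>m. m \<ge> Ki \<Longrightarrow> T F i m \<le> ep * (R F i m)^2" using ti.T_small[OF Pi ep] by blast
      have ev2: "eventually (\<lambda>N. urn_init chi N j \<ge> Kj) sequentially" using init_large chi j by auto
      have ev3: "eventually (\<lambda>N. urn_init chi N i \<ge> Ki) sequentially" using init_large chi i by auto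
      show "eventually (\<lambda>N. dist (measure (M N) (BadS N j)) 0 < e) sequentially"
        using ev_good ev1 ev2 ev3
      proof eventually_elim
        case (elim N)
        define Ri where "Ri = R F i (x0 N i)"
        define Rj where "Rj = R F j (x0 N j)"
        have xi: "x0 N i \<ge> 1" and xj: "x0 N j \<ge> 1" using elim(1) i j unfolding good_def x0_def by auto
        have Ri: "Ri > 0" using ti.R_pos xi Ri_def by simp
        have Rj: "Rj > 0" using tj.R_pos xj Rj_def by simp
        have tsi: "tail_sum F i (x0 N i) = ereal Ri"
          unfolding tail_sum_def Ri_def R_def using suminf_ereal'[OF ti.summ] .
        have tsj: "tail_sum F j (x0 N j) = ereal Rj"
          unfolding tail_sum_def Rj_def R_def using suminf_ereal'[OF tj.summ] .
        have "ereal (Ri / Rj) < ereal c" using elim(2) tsi tsj Rj unfolding x0_def by simp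
        then have "Ri / Rj < c" by simp
        then have lt: "Ri < c * Rj" using Rj by (simp add: divide_less_eq)
        have D: "Rj - Ri > 0" using lt c1 Rj Ri by (smt (verit) mult_less_cancel_right1)
        have b: "measure (M N) (BadS N j) \<le> 4 * (T F j (x0 N j) + T F i (x0 N i)) / (Rj - Ri)^2"
          using isM[OF elim(1) j True] D unfolding Ri_def Rj_def by simp
        also have "\<dots> \<le> 8 * ep / (1 - c)^2"
          unfolding Ri_def Rj_def
          by (rule arith_bound) (use Ri Rj lt c1 ep Kj[of "x0 N j"] Ki[of "x0 N i"] elim(3,4) tj.T_nonneg ti.T_nonneg
              in \<open>auto simp: Ri_def Rj_def x0_def\<close>)
        also have "\<dots> = e / 2" unfolding ep_def using c1 by simp
        finally have "measure (M N) (BadS N j) \<le> e / 2" .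
        then show ?case using e measure_nonneg[of "M N" "BadS N j"] by simp
      qed
    qed
  qed
  have "(\<lambda>N. \<Sum>j\<in>?J. measure (M N) (BadS N j)) \<longlonglongrightarrow> 0"
    using lim_j by (rule tendsto_null_sum)
  then have l1: "(\<lambda>N. 1 - (\<Sum>j\<in>?J. measure (M N) (BadS N j))) \<longlonglongrightarrow> 1"
    using tendsto_diff[OF tendsto_const[of 1]] by fastforce
  show ?thesis
    by (rule tendsto_sandwich[OF _ _ l1 tendsto_const[of 1]])
       (use ev_good lower upper in \<open>auto elim: eventually_mono\<close>)
qed


end
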